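(* If $\lambda<1-\frac1d$, then the unique fixed point $x^\star$ is given by $x^\star_{0,0}=1-\lambda-\frac1d$, $x^\star_{0,1}=\frac1d$, $x^\star_{1,1}=\lambda$ and $x^\star_{i,j}=0$ for all other $(i,j)$; in particular $x^\star_{0,0}>0$.
   Context: Fix $\lambda\in(0,1)$, an integer $d\ge2$ and an integer $I>1$. $\mathcal S=\{x=(x_{i,j})_{0\le i\le j\le I}: x_{i,j}\ge0,\ \sum_{i=0}^I\sum_{j=i}^I x_{i,j}=1\}$; $x_{i,\cdot}=\sum_{j=i}^I x_{i,j}$, $x_{\cdot,j}=\sum_{i=0}^j x_{i,j}$. For $0\le j\le I$: $\mathcal R_j(x)=\max\{0,\lambda(1-d\sum_{i=0}^j(j+1-i)x_{i,\cdot})\}\,\mathbf 1\{\sum_{i=0}^j x_{\cdot,i}=0\}$, $\mathcal G_j(x)=\lambda d\,\mathbf 1\{\sum_{i=0}^j x_{\cdot,i}=0,\ d\sum_{i=0}^j(j+1-i)x_{i,\cdot}\le1\}\sum_{i=0}^j x_{i,\cdot}$. Write $\rho_k^{a,b}(x)=\mathcal R_k(x)\frac{x_{a,b}}{x_{\cdot,b}}\mathbf 1\{x_{\cdot,b}>0\}$ (equal to $0$ when $x_{\cdot,b}=0$). The drift $b(x)$ is: $b_{0,0}=\lambda d(x_{0,\cdot}-x_{0,0})-\lambda+\mathcal R_0(x)$; for $i<j$: $b_{i,j}=x_{i+1,j}-\mathbf 1\{i>0\}x_{i,j}-\lambda d x_{i,j}-\rho_{j-1}^{i,j}+\mathbf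 1\{i>0\}\rho_{j-2}^{i-1,j-1}+\mathbf 1\{j=I,i>0\}\rho_{I-1}^{i-1,I}$; $b_{1,1}=-x_{1,1}+\lambda d(x_{1,\cdot}-x_{1,1})+\lambda-\mathcal R_0(x)-\rho_0^{1,1}-\mathcal G_1(x)$; for $2\le i\le I-1$: $b_{i,i}=-x_{i,i}+\lambda d(x_{i,\cdot}-x_{i,i})-\rho_{i-1}^{i,i}+\rho_{i-2}^{i-1,i-1}+\mathcal G_{i-1}(x)-\mathcal G_i(x)$; $b_{I,I}=-x_{I,I}+\rho_{I-2}^{I-1,I-1}+\mathcal G_{I-1}(x)+\rho_{I-1}^{I-1,I}$. A fluid solution is an absolutely continuous $x:\mathbb R_+\to\mathcal S$ with $\dot x_{i,j}(t)=b_{i,j}(x(t))$ for a.e. $t$ and all $i\le j$. A fixed point is a fluid solution with $b(x(t))=0$ for all $t\ge0$ (hence constant, identified with a point of $\mathcal S$); it is unique. *)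

theory Defs
  imports Complex_Main
begin

text \<open>A state x is a function nat => nat => real; only the entries x i j with
  0 <= i <= j <= I are meaningful. Parameters: lam (lambda), d, I.\<close>

definition row :: "nat \<Rightarrow> (nat \<Rightarrow> nat \<Rightarrow> real) \<Rightarrow> nat \<Rightarrow> real" where
  "row I x i = (\<Sum>j=i..I. x i j)"

definition col :: "(nat \<Rightarrow> nat \<Rightarrow> real) \<Rightarrow> nat \<Rightarrow> real" where
  "col x j = (\<Sum>i=0..j. x i j)"

definition inS :: "nat \<Rightarrow> (nat \<Rightarrow> nat \<Rightarrow> real) \<Rightarrow> bool" where
  "inS I x \<longleftrightarrow> (\<forall>i j. i \<le> j \<and> j \<le> I \<longrightarrow> 0 \<le> x i j)
     \<and> (\<Sum>i=0..I. \<Sum>j=i..I. x i j) = 1"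

definition Rf :: "real \<Rightarrow> nat \<Rightarrow> nat \<Rightarrow> (nat \<Rightarrow> nat \<Rightarrow> real) \<Rightarrow> nat \<Rightarrow> real" where
  "Rf lam d I x j =
     (if (\<Sum>i=0..j. col x i) = 0
      then max 0 (lam * (1 - real d * (\<Sum>i=0..j. real (j + 1 - i) * row I x i)))
      else 0)"

definition Gf :: "real \<Rightarrow> nat \<Rightarrow> nat \<Rightarrow> (nat \<Rightarrow> nat \<Rightarrow> real) \<Rightarrow> nat \<Rightarrow> real" where
  "Gf lam d I x j =
     lam * real d *
     (if (\<Sum>i=0..j. col x i) = 0 \<and> real d * (\<Sum>i=0..j. real (j + 1 - i) * row I x i) \<le> 1
      then (\<Sum>i=0..j. row I x i) else 0)"

definition rho :: "real \<Rightarrow> nat \<Rightarrow> nat \<Rightarrow> (nat \<Rightarrow> nat \<Rightarrow> real) \<Rightarrow> nat \<Rightarrow> nat \<Rightarrow> nat \<Rightarrow> real" where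
  "rho lam d I x k a b = (if col x b > 0 then Rf lam d I x k * x a b / col x b else 0)"

definition drift :: "real \<Rightarrow> nat \<Rightarrow> nat \<Rightarrow> (nat \<Rightarrow> nat \<Rightarrow> real) \<Rightarrow> nat \<Rightarrow> nat \<Rightarrow> real" where
  "drift lam d I x i j =
    (if i = 0 \<and> j = 0 then
       lam * real d * (row I x 0 - x 0 0) - lam + Rf lam d I x 0
     else if i < j then
       x (i + 1) j - (if 0 < i then x i j else 0) - lam * real d * x i j
       - rho lam d I x (j - 1) i j
       + (if 0 < i then rho lam d I x (j - 2) (i - 1) (j - 1) else 0)
       + (if j = I \<and> 0 < i then rho lam d I x (I - 1) (i - 1) I else 0)
     else if i = 1 \<and> j = 1 then
       - x 1 1 + lam * real d * (row I x 1 - x 1 1) + lam - Rf lam d I x 0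
       - rho lam d I x 0 1 1 - Gf lam d I x 1
     else if i = j \<and> 2 \<le> i \<and> i \<le> I - 1 then
       - x i i + lam * real d * (row I x i - x i i) - rho lam d I x (i - 1) i i
       + rho lam d I x (i - 2) (i - 1) (i - 1) + Gf lam d I x (i - 1) - Gf lam d I x i
     else if i = I \<and> j = I then
       - x I I + rho lam d I x (I - 2) (I - 1) (I - 1) + Gf lam d I x (I - 1)
       + rho lam d I x (I - 1) (I - 1) I
     else 0)"

text \<open>A fixed point: a (constant) fluid solution with zero drift, identified with a
  point of S at which every drift coordinate (0 <= i <= j <= I) vanishes.\<close>
definition fixed_point :: "real \<Rightarrow> nat \<Rightarrow> nat \<Rightarrow> (nat \<Rightarrow> nat \<Rightarrow> real) \<Rightarrow> bool" where
  "fixed_point lam d I x \<longleftrightarrow> inS I x \<and> (\<forall>i j. i \<le> j \<and> j \<le> I \<longrightarrow> drift lam d I x i j = 0)"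

definition xstar :: "real \<Rightarrow> nat \<Rightarrow> nat \<Rightarrow> nat \<Rightarrow> real" where
  "xstar lam d i j =
    (if i = 0 \<and> j = 0 then 1 - lam - 1 / real d
     else if i = 0 \<and> j = 1 then 1 / real d
     else if i = 1 \<and> j = 1 then lam
     else 0)"

end

theory Submission
  imports Defs
begin

definition Q :: "real \<Rightarrow> nat \<Rightarrow> nat \<Rightarrow> (nat \<Rightarrow> nat \<Rightarrow> real) \<Rightarrow> nat \<Rightarrow> nat \<Rightarrow> real" where
  "Q lam d I x a b = rho lam d I x (b - 1) a b"

definition P :: "real \<Rightarrow> nat \<Rightarrow> nat \<Rightarrow> (nat \<Rightarrow> nat \<Rightarrow> real) \<Rightarrow> nat \<Rightarrow> real" where
  "P lam d I x a = (\<Sum>b=a..I. if 0 < b \<and> a < I then Q lam d I x a b else 0)"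

definition G' :: "real \<Rightarrow> nat \<Rightarrow> nat \<Rightarrow> (nat \<Rightarrow> nat \<Rightarrow> real) \<Rightarrow> nat \<Rightarrow> real" where
  "G' lam d I x i = (if i = 0 then lam - Rf lam d I x 0 else if i < I then Gf lam d I x i else 0)"

lemma drift_off:
  assumes "1 \<le> i" "i < j" "j \<le> I"
  shows "drift lam d I x i j = x (i+1) j - x i j - lam * real d * x i j - Q lam d I x i j
     + Q lam d I x (i-1) (j-1) + (if j = I then Q lam d I x (i-1) I else 0)"
  using assms by (simp add: drift_def Q_def numeral_2_eq_2)

lemma drift_off0:
  assumes "0 < j"
  shows "drift lam d I x 0 j = x 1 j - lam * real d * x 0 j - Q lam d I x 0 j"
  using assms by (simp add: drift_def Q_def numeral_2_eq_2)

lemma row_split: "i \<le> I \<Longrightarrow> row I x i = x i i + (\<Sum>j=Suc i..I. x i j)"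
  unfolding row_def by (simp add: sum.atLeast_Suc_atMost)

lemma rowsum0:
  assumes "1 < I"
  shows "(\<Sum>j=0..I. drift lam d I x 0 j) = row I x 1 - P lam d I x 0 - G' lam d I x 0"
proof -
  have s: "(\<Sum>j=0..I. drift lam d I x 0 j) = drift lam d I x 0 0 + (\<Sum>j=1..I. drift lam d I x 0 j)"
    by (simp add: sum.atLeast_Suc_atMost)
  have "(\<Sum>j=1..I. drift lam d I x 0 j) = (\<Sum>j=1..I. x 1 j - lam * real d * x 0 j - Q lam d I x 0 j)"
    by (rule sum.cong) (auto simp: drift_off0)
  also have "\<dots> = row I x 1 - lam * real d * (\<Sum>j=1..I. x 0 j) - (\<Sum>j=1..I. Q lam d I x 0 j)"
    by (simp add: sum_subtractf sum_distrib_left row_def)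
  finally have s2: "(\<Sum>j=1..I. drift lam d I x 0 j) = row I x 1 - lam * real d * (\<Sum>j=1..I. x 0 j) - (\<Sum>j=1..I. Q lam d I x 0 j)" .
  have r0: "row I x 0 = x 0 0 + (\<Sum>j=1..I. x 0 j)" using row_split[of 0 I x] by simp
  have p0: "P lam d I x 0 = (\<Sum>j=1..I. Q lam d I x 0 j)"
    unfolding P_def using assms by (simp add: sum.atLeast_Suc_atMost)
  have d0: "drift lam d I x 0 0 = lam * real d * (row I x 0 - x 0 0) - lam + Rf lam d I x 0"
    by (simp add: drift_def)
  show ?thesis using s s2 r0 p0 d0 by (simp add: G'_def algebra_simps)
qed


lemma rowsum_mid:
  assumes "1 \<le> i" "i < I"
  shows "(\<Sum>j=i..I. drift lam d I x i j) = row I x (i+1) - row I x i - P lam d I x i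
      + P lam d I x (i-1) + G' lam d I x (i-1) - G' lam d I x i"
proof -
  obtain n where n: "I = Suc n" using assms by (cases I) auto
  have iin: "i \<le> n" using assms n by simp
  let ?Q = "Q lam d I x"
  have s: "(\<Sum>j=i..I. drift lam d I x i j) = drift lam d I x i i + (\<Sum>b=i..n. drift lam d I x i (Suc b))"
  proof -
    have "(\<Sum>j=i..I. drift lam d I x i j) = drift lam d I x i i + (\<Sum>j=Suc i..Suc n. drift lam d I x i j)"
      unfolding n by (rule sum.atLeast_Suc_atMost) (use iin in simp)
    also have "(\<Sum>j=Suc i..Suc n. drift lam d I x i j) = (\<Sum>b=i..n. drift lam d I x i (Suc b))"
      by (rule sum.shift_bounds_cl_Suc_ivl)
    finally show ?thesis .
  qed
  have "(\<Sum>b=i..n. drift lam d I x i (Suc b)) = (\<Sum>b=i..n. x (Suc i) (Suc b) - x i (Suc b)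
      - lam * real d * x i (Suc b) - ?Q i (Suc b) + ?Q (i-1) b + (if b = n then ?Q (i-1) I else 0))"
    by (rule sum.cong) (use assms n in \<open>auto simp: drift_off\<close>)
  also have "\<dots> = (\<Sum>b=i..n. x (Suc i) (Suc b)) - (\<Sum>b=i..n. x i (Suc b))
      - lam * real d * (\<Sum>b=i..n. x i (Suc b)) - (\<Sum>b=i..n. ?Q i (Suc b)) + (\<Sum>b=i..n. ?Q (i-1) b) + ?Q (i-1) I"
    using iin by (simp add: sum.distrib sum_subtractf sum_distrib_left)
  finally have s2: "(\<Sum>b=i..n. drift lam d I x i (Suc b)) = (\<Sum>b=i..n. x (Suc i) (Suc b)) - (\<Sum>b=i..n. x i (Suc b))
      - lam * real d * (\<Sum>b=i..n. x i (Suc b)) - (\<Sum>b=i..n. ?Q i (Suc b)) + (\<Sum>b=i..n. ?Q (i-1) b) + ?Q (i-1) I" .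
  have r1: "row I x (i+1) = (\<Sum>b=i..n. x (Suc i) (Suc b))"
    unfolding row_def n Suc_eq_plus1[symmetric] by (rule sum.shift_bounds_cl_Suc_ivl)
  have r0: "row I x i = x i i + (\<Sum>b=i..n. x i (Suc b))"
  proof -
    have "(\<Sum>j=Suc i..I. x i j) = (\<Sum>b=i..n. x i (Suc b))" unfolding n by (rule sum.shift_bounds_cl_Suc_ivl)
    thus ?thesis using row_split[of i I x] assms by simp
  qed
  have p1: "P lam d I x i = ?Q i i + (\<Sum>b=i..n. ?Q i (Suc b))"
  proof -
    have "(\<Sum>j=Suc i..I. ?Q i j) = (\<Sum>b=i..n. ?Q i (Suc b))" unfolding n by (rule sum.shift_bounds_cl_Suc_ivl)
    moreover have "P lam d I x i = (\<Sum>j=i..I. ?Q i j)" unfolding P_def using assms by (intro sum.cong) auto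
    moreover have "(\<Sum>j=i..I. ?Q i j) = ?Q i i + (\<Sum>j=Suc i..I. ?Q i j)" using assms by (intro sum.atLeast_Suc_atMost) simp
    ultimately show ?thesis by simp
  qed
  have p0: "P lam d I x (i-1) = (if 2 \<le> i then ?Q (i-1) (i-1) else 0) + (\<Sum>b=i..n. ?Q (i-1) b) + ?Q (i-1) I"
  proof -
    have "P lam d I x (i-1) = (\<Sum>b=i-1..Suc n. if 0 < b then ?Q (i-1) b else 0)"
      unfolding P_def using assms n by (intro sum.cong) auto
    also have "\<dots> = (if 0 < i - 1 then ?Q (i-1) (i-1) else 0) + (\<Sum>b=i..Suc n. if 0 < b then ?Q (i-1) b else 0)"
      using assms iin by (subst sum.atLeast_Suc_atMost) (auto simp del: sum.cl_ivl_Suc)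
    also have "(\<Sum>b=i..Suc n. if 0 < b then ?Q (i-1) b else 0) = (\<Sum>b=i..n. ?Q (i-1) b) + ?Q (i-1) I"
      using assms iin n by (simp add: sum.cl_ivl_Suc)
    finally show ?thesis by auto
  qed
  have dii: "drift lam d I x i i = - x i i + lam * real d * (row I x i - x i i) - ?Q i i
      + (if 2 \<le> i then ?Q (i-1) (i-1) else 0) + G' lam d I x (i-1) - G' lam d I x i"
  proof (cases "i = 1")
    case True thus ?thesis using assms by (simp add: drift_def Q_def G'_def)
  next
    case False
    hence h: "2 \<le> i" "i \<le> I - 1" "i - 1 \<noteq> 0" "i - 1 < I" "i \<noteq> 0" "\<not> (i = 1)" using assms by auto
    have "drift lam d I x i i = - x i i + lam * real d * (row I x i - x i i) - rho lam d I x (i - 1) i i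
       + rho lam d I x (i - 2) (i - 1) (i - 1) + Gf lam d I x (i - 1) - Gf lam d I x i"
      unfolding drift_def using h by (simp only: if_False if_True) simp
    moreover have "i - 1 - 1 = i - 2" by simp
    ultimately show ?thesis using h assms by (simp add: Q_def G'_def)
  qed
  show ?thesis using s s2 r1 r0 p1 p0 dii by (simp add: algebra_simps)
qed

lemma rowsum_top:
  assumes "1 < I"
  shows "(\<Sum>j=I..I. drift lam d I x I j) = row I x (I+1) - row I x I - P lam d I x I
      + P lam d I x (I-1) + G' lam d I x (I-1) - G' lam d I x I"
proof -
  have p: "P lam d I x (I-1) = Q lam d I x (I-1) (I-1) + Q lam d I x (I-1) I"
    unfolding P_def using assms
    by (subst sum.atLeast_Suc_atMost) (auto simp: Suc_diff_1)
  have "drift lam d I x I I = - x I I + Q lam d I x (I-1) (I-1) + Gf lam d I x (I-1) + Q lam d I x (I-1) I"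
  proof -
    have "\<not> I \<le> I - Suc 0" using assms by simp
    thus ?thesis using assms by (simp add: drift_def Q_def numeral_2_eq_2)
  qed
  thus ?thesis using p assms by (simp add: row_def P_def G'_def)
qed


lemma inS_nonneg: "inS I x \<Longrightarrow> i \<le> j \<Longrightarrow> j \<le> I \<Longrightarrow> 0 \<le> x i j"
  unfolding inS_def by blast

lemma row_nonneg: "inS I x \<Longrightarrow> 0 \<le> row I x i"
  unfolding row_def by (rule sum_nonneg) (auto intro: inS_nonneg)

lemma col_nonneg: "inS I x \<Longrightarrow> j \<le> I \<Longrightarrow> 0 \<le> col x j"
  unfolding col_def by (rule sum_nonneg) (auto intro: inS_nonneg)

lemma rows_total: "inS I x \<Longrightarrow> (\<Sum>i=0..I. row I x i) = 1"
  unfolding inS_def row_def by simp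

lemma Rf_nonneg: "0 \<le> Rf lam d I x n"
  unfolding Rf_def by simp

lemma Gf_nonneg: "0 \<le> lam \<Longrightarrow> inS I x \<Longrightarrow> 0 \<le> Gf lam d I x n"
  unfolding Gf_def by (auto intro!: mult_nonneg_nonneg sum_nonneg row_nonneg)

lemma Q_nonneg: "inS I x \<Longrightarrow> a \<le> b \<Longrightarrow> b \<le> I \<Longrightarrow> 0 \<le> Q lam d I x a b"
  unfolding Q_def rho_def by (auto intro!: divide_nonneg_pos mult_nonneg_nonneg Rf_nonneg inS_nonneg)

lemma Z_false:
  assumes "\<And>i. i \<le> n \<Longrightarrow> 0 \<le> col x i" "0 < col x 0"
  shows "(\<Sum>i=0..n. col x i) \<noteq> 0"
proof -
  have "(\<Sum>i=0..n. col x i) = col x 0 + (\<Sum>i=Suc 0..n. col x i)"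
    by (rule sum.atLeast_Suc_atMost) simp
  moreover have "0 \<le> (\<Sum>i=Suc 0..n. col x i)" by (rule sum_nonneg) (use assms in auto)
  ultimately show ?thesis using assms by linarith
qed

lemma rows_eq:
  assumes fp: "fixed_point lam d I x" and I: "1 < I" and i: "i < I"
  shows "row I x (i+1) = P lam d I x i + G' lam d I x i"
  using i
proof (induction i)
  case 0
  have "(\<Sum>j=0..I. drift lam d I x 0 j) = 0"
    using fp unfolding fixed_point_def by (intro sum.neutral) auto
  then show ?case using rowsum0[OF I, of lam d x] by simp
next
  case (Suc i)
  have "(\<Sum>j=Suc i..I. drift lam d I x (Suc i) j) = 0"
    using fp unfolding fixed_point_def by (intro sum.neutral) auto
  then show ?case using rowsum_mid[of "Suc i" I lam d x] Suc by simp
qed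

lemma tri_swap: "(\<Sum>a=0..(n::nat). \<Sum>b=a..n. f a b) = (\<Sum>b=0..n. \<Sum>a=0..b. (f a b :: real))"
  by (induction n) (auto simp: sum.distrib)


lemma colsum_Q: "(\<Sum>a=0..b. Q lam d I x a b) = (if col x b > 0 then Rf lam d I x (b-1) else 0)"
proof (cases "col x b > 0")
  case True
  have "(\<Sum>a=0..b. Q lam d I x a b) = (\<Sum>a=0..b. Rf lam d I x (b-1) * x a b / col x b)"
    using True unfolding Q_def rho_def by simp
  also have "\<dots> = Rf lam d I x (b-1) * (\<Sum>a=0..b. x a b) / col x b"
    by (simp add: sum_divide_distrib[symmetric] sum_distrib_left[symmetric])
  also have "\<dots> = Rf lam d I x (b-1)" using True by (simp add: col_def)
  finally show ?thesis using True by simp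
next
  case False thus ?thesis unfolding Q_def rho_def by simp
qed

lemma P_bound:
  assumes S: "inS I x" and I: "1 < I"
  shows "(\<Sum>a=0..I-1. P lam d I x a) \<le> (\<Sum>b=1..I. if col x b > 0 then Rf lam d I x (b-1) else 0)"
proof -
  let ?f = "\<lambda>a b. if 0 < b then Q lam d I x a b else 0"
  have "(\<Sum>a=0..I-1. P lam d I x a) = (\<Sum>a=0..I-1. \<Sum>b=a..I. ?f a b)"
    unfolding P_def using I by (intro sum.cong) auto
  also have "\<dots> \<le> (\<Sum>a=0..I. \<Sum>b=a..I. ?f a b)"
    by (rule sum_mono2) (auto intro!: sum_nonneg Q_nonneg[OF S])
  also have "\<dots> = (\<Sum>b=0..I. \<Sum>a=0..b. ?f a b)" by (rule tri_swap)
  also have "\<dots> = (\<Sum>b=0..I. if 0 < b then (if col x b > 0 then Rf lam d I x (b-1) else 0) else 0)"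
    by (intro sum.cong refl) (simp add: colsum_Q)
  also have "\<dots> = (\<Sum>b=1..I. if col x b > 0 then Rf lam d I x (b-1) else 0)"
    by (subst sum.atLeast_Suc_atMost) (auto intro!: sum.cong)
  finally show ?thesis .
qed

lemma Wrec: "(\<Sum>i=0..Suc n. real (Suc n + 1 - i) * r i) = (\<Sum>i=0..n. real (n + 1 - i) * r i) + (\<Sum>i=0..Suc n. (r i :: real))"
proof -
  have "(\<Sum>i=0..Suc n. real (Suc n + 1 - i) * r i) = (\<Sum>i=0..Suc n. real (n + 1 - i) * r i + r i)"
    by (intro sum.cong refl) (auto simp: Suc_diff_le algebra_simps)
  also have "\<dots> = (\<Sum>i=0..Suc n. real (n + 1 - i) * r i) + (\<Sum>i=0..Suc n. r i)" by (simp add: sum.distrib)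
  also have "(\<Sum>i=0..Suc n. real (n + 1 - i) * r i) = (\<Sum>i=0..n. real (n + 1 - i) * r i)" by simp
  finally show ?thesis .
qed

lemma tele_step:
  assumes S: "inS I x" and lam: "0 < lam" and n: "Suc n \<le> I"
  shows "Gf lam d I x (Suc n) + (if col x (Suc n) > 0 then Rf lam d I x n else 0) + Rf lam d I x (Suc n)
     \<le> Rf lam d I x n"
proof -
  define Sc where "Sc = (\<Sum>i=0..n. col x i)"
  define C where "C = col x (Suc n)"
  define W where "W = real d * (\<Sum>i=0..n. real (n + 1 - i) * row I x i)"
  define T where "T = (\<Sum>i=0..Suc n. row I x i)"
  have Sc0: "0 \<le> Sc" unfolding Sc_def using n by (intro sum_nonneg) (auto intro!: col_nonneg[OF S])
  have C0: "0 \<le> C" unfolding C_def using n by (auto intro!: col_nonneg[OF S])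
  have T0: "0 \<le> T" unfolding T_def by (intro sum_nonneg) (auto intro!: row_nonneg[OF S])
  have d0: "0 \<le> real d" by simp
  have W': "real d * (\<Sum>i=0..Suc n. real (Suc n + 1 - i) * row I x i) = W + real d * T"
    unfolding W_def T_def by (subst Wrec) (simp only: distrib_left)
  have Rn: "Rf lam d I x n = (if Sc = 0 then max 0 (lam * (1 - W)) else 0)"
    unfolding Rf_def Sc_def W_def by simp
  have Rn1: "Rf lam d I x (Suc n) = (if Sc + C = 0 then max 0 (lam * (1 - (W + real d * T))) else 0)"
    unfolding Rf_def Sc_def C_def using W' by simp
  have Gn1: "Gf lam d I x (Suc n) = lam * real d * (if Sc + C = 0 \<and> W + real d * T \<le> 1 then T else 0)"
    unfolding Gf_def Sc_def C_def T_def using W'[unfolded T_def] by simp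
  show ?thesis
  proof (cases "Sc = 0")
    case False
    hence "Sc + C \<noteq> 0" using Sc0 C0 by linarith
    thus ?thesis using False Rn Rn1 Gn1 by simp
  next
    case True
    show ?thesis
    proof (cases "C > 0")
      case True
      hence "Sc + C \<noteq> 0" using Sc0 by linarith
      thus ?thesis using True Rn Rn1 Gn1 by simp
    next
      case False
      hence C: "C = 0" using C0 by simp
      have dT: "0 \<le> real d * T" using T0 by simp
      show ?thesis
      proof (cases "W + real d * T \<le> 1")
        case True
        have "lam * (1 - W) \<ge> 0" using True dT lam by (intro mult_nonneg_nonneg) auto
        moreover have "lam * (1 - (W + real d * T)) \<ge> 0" using True lam by (intro mult_nonneg_nonneg) auto
        ultimately show ?thesis using True C \<open>Sc = 0\<close> Rn Rn1 Gn1 False unfolding C_def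
          by (simp add: algebra_simps)
      next
        case False
        have "lam * (1 - (W + real d * T)) \<le> 0" using False lam by (intro mult_nonneg_nonpos) auto
        thus ?thesis using False C \<open>Sc = 0\<close> Rn Rn1 Gn1 \<open>\<not> C > 0\<close> unfolding C_def by simp
      qed
    qed
  qed
qed

lemma tele:
  assumes S: "inS I x" and lam: "0 < lam" and n: "n \<le> I"
  shows "- Rf lam d I x 0 + (\<Sum>m=1..n. Gf lam d I x m)
     + (\<Sum>b=1..n. if col x b > 0 then Rf lam d I x (b-1) else 0) + Rf lam d I x n \<le> 0"
  using n
proof (induction n)
  case 0 thus ?case by simp
next
  case (Suc n)
  have "Gf lam d I x (Suc n) + (if col x (Suc n) > 0 then Rf lam d I x n else 0) + Rf lam d I x (Suc n)
     \<le> Rf lam d I x n" by (rule tele_step[OF S lam Suc.prems])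
  thus ?case using Suc by (cases "0 < col x (Suc n)") (simp_all; linarith)+
qed


lemma sum_rows_pos:
  assumes fp: "fixed_point lam d I x" and I: "1 < I"
  shows "(\<Sum>i=1..I. row I x i) = (\<Sum>a=0..I-1. P lam d I x a) + lam - Rf lam d I x 0 + (\<Sum>m=1..I-1. Gf lam d I x m)"
proof -
  obtain n where n: "I = Suc n" using I by (cases I) auto
  have "(\<Sum>i=1..I. row I x i) = (\<Sum>i=0..n. row I x (Suc i))"
    unfolding n One_nat_def by (rule sum.shift_bounds_cl_Suc_ivl)
  also have "\<dots> = (\<Sum>i=0..n. P lam d I x i + G' lam d I x i)"
    using rows_eq[OF fp I] n by (intro sum.cong) auto
  also have "\<dots> = (\<Sum>i=0..n. P lam d I x i) + (\<Sum>i=0..n. G' lam d I x i)" by (simp add: sum.distrib)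
  also have "(\<Sum>i=0..n. G' lam d I x i) = G' lam d I x 0 + (\<Sum>i=Suc 0..n. G' lam d I x i)"
    by (rule sum.atLeast_Suc_atMost) simp
  also have "(\<Sum>i=Suc 0..n. G' lam d I x i) = (\<Sum>m=1..I-1. Gf lam d I x m)"
    using n by (intro sum.cong) (auto simp: G'_def)
  finally show ?thesis using n by (simp add: G'_def)
qed

lemma no_zero_case:
  assumes fp: "fixed_point lam d I x" and lam: "0 < lam" and d: "2 \<le> d" and I: "1 < I"
    and lt: "lam < 1 - 1 / real d" and x0: "x 0 0 = 0"
  shows False
proof -
  have S: "inS I x" using fp unfolding fixed_point_def by simp
  have c0: "col x 0 = 0" using x0 by (simp add: col_def)
  have dpos: "0 < real d" using d by simp
  have dr: "drift lam d I x 0 0 = 0" using fp unfolding fixed_point_def by auto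
  have R0: "Rf lam d I x 0 = max 0 (lam * (1 - real d * row I x 0))"
    unfolding Rf_def using c0 by simp
  have "lam * real d * row I x 0 - lam + Rf lam d I x 0 = 0"
    using dr x0 by (simp add: drift_def)
  have r0: "real d * row I x 0 \<le> 1"
  proof (rule ccontr)
    assume h: "\<not> real d * row I x 0 \<le> 1"
    hence "lam * (1 - real d * row I x 0) < 0" using lam by (intro mult_pos_neg) auto
    hence "Rf lam d I x 0 = 0" using R0 by simp
    hence "lam * (real d * row I x 0 - 1) = 0" using \<open>lam * real d * row I x 0 - lam + Rf lam d I x 0 = 0\<close>
      by (simp add: algebra_simps)
    thus False using h lam by simp
  qed
  have tot: "row I x 0 + (\<Sum>i=1..I. row I x i) = 1"
    using rows_total[OF S] by (simp add: sum.atLeast_Suc_atMost)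
  have sr: "(\<Sum>i=1..I. row I x i) = (\<Sum>a=0..I-1. P lam d I x a) + lam - Rf lam d I x 0 + (\<Sum>m=1..I-1. Gf lam d I x m)"
    by (rule sum_rows_pos[OF fp I])
  have pb: "(\<Sum>a=0..I-1. P lam d I x a) \<le> (\<Sum>b=1..I. if col x b > 0 then Rf lam d I x (b-1) else 0)"
    by (rule P_bound[OF S I])
  have gb: "(\<Sum>m=1..I-1. Gf lam d I x m) \<le> (\<Sum>m=1..I. Gf lam d I x m)"
    by (rule sum_mono2) (auto intro!: Gf_nonneg S simp: less_imp_le[OF lam])
  have te: "- Rf lam d I x 0 + (\<Sum>m=1..I. Gf lam d I x m)
     + (\<Sum>b=1..I. if col x b > 0 then Rf lam d I x (b-1) else 0) + Rf lam d I x I \<le> 0"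
    by (rule tele[OF S lam order_refl])
  have "0 \<le> Rf lam d I x I" by (rule Rf_nonneg)
  hence "1 - row I x 0 \<le> lam" using tot sr pb gb te by linarith
  moreover have "row I x 0 \<le> 1 / real d" using r0 dpos by (simp add: field_simps)
  ultimately show False using lt by linarith
qed


lemma pos_case:
  assumes fp: "fixed_point lam d I x" and lam: "0 < lam" and d: "2 \<le> d" and I: "1 < I"
    and x0: "0 < x 0 0" and ij: "i \<le> j" "j \<le> I"
  shows "x i j = xstar lam d i j"
proof -
  have S: "inS I x" using fp unfolding fixed_point_def by simp
  have dr: "\<And>i j. i \<le> j \<Longrightarrow> j \<le> I \<Longrightarrow> drift lam d I x i j = 0"
    using fp unfolding fixed_point_def by auto
  have dpos: "0 < real d" using d by simp
  have c0: "0 < col x 0" using x0 by (simp add: col_def)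
  have Z: "\<And>n. n \<le> I \<Longrightarrow> (\<Sum>i=0..n. col x i) \<noteq> 0"
    by (rule Z_false) (use c0 col_nonneg[OF S] in auto)
  have zR: "\<And>n. n \<le> I \<Longrightarrow> Rf lam d I x n = 0" using Z by (simp add: Rf_def)
  have zG: "\<And>n. n \<le> I \<Longrightarrow> Gf lam d I x n = 0" using Z by (simp add: Gf_def)
  have zQ: "\<And>a b. b \<le> I \<Longrightarrow> Q lam d I x a b = 0" using zR by (simp add: Q_def rho_def)
  have zrho: "\<And>a b k. k \<le> I \<Longrightarrow> rho lam d I x k a b = 0" using zR by (simp add: rho_def)
  have zP: "\<And>a. P lam d I x a = 0" unfolding P_def using zQ by (intro sum.neutral) auto
  have row1: "row I x 1 = lam" using rows_eq[OF fp I, of 0] zP zR[of 0] I by (simp add: G'_def)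
  have rowi: "\<And>i. 2 \<le> i \<Longrightarrow> i \<le> I \<Longrightarrow> row I x i = 0"
  proof -
    fix i :: nat assume "2 \<le> i" "i \<le> I"
    then obtain k where k: "i = k + 1" "1 \<le> k" "k < I" by (cases i) auto
    show "row I x i = 0" using rows_eq[OF fp I k(3)] zP zG k by (simp add: G'_def)
  qed
  have xhi: "\<And>i j. 2 \<le> i \<Longrightarrow> i \<le> j \<Longrightarrow> j \<le> I \<Longrightarrow> x i j = 0"
  proof -
    fix i j :: nat assume h: "2 \<le> i" "i \<le> j" "j \<le> I"
    have "(\<Sum>j=i..I. x i j) = 0" using rowi[of i] h by (simp add: row_def)
    moreover have "\<forall>j\<in>{i..I}. 0 \<le> x i j" using inS_nonneg[OF S] by auto
    ultimately show "x i j = 0" using h by (subst (asm) sum_nonneg_eq_0_iff) auto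
  qed
  have "drift lam d I x 1 1 = 0" using dr[of 1 1] I by simp
  hence "- x 1 1 + lam * real d * (row I x 1 - x 1 1) + lam = 0"
    using zR[of 0] zG[of 1] zrho[of 0] I by (simp add: drift_def)
  hence "(1 + lam * real d) * (lam - x 1 1) = 0" using row1 by (simp add: algebra_simps)
  moreover have "0 < 1 + lam * real d" using lam dpos by (simp add: add_pos_pos)
  ultimately have x11: "x 1 1 = lam" by simp
  have "(\<Sum>j=Suc 1..I. x 1 j) = 0" using row_split[of 1 I x] I row1 x11 by simp
  moreover have "\<forall>j\<in>{Suc 1..I}. 0 \<le> x 1 j" using inS_nonneg[OF S] by auto
  ultimately have x1j: "\<And>j. 2 \<le> j \<Longrightarrow> j \<le> I \<Longrightarrow> x 1 j = 0"
    by (subst (asm) sum_nonneg_eq_0_iff) auto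
  have "x 1 1 - lam * real d * x 0 1 - Q lam d I x 0 1 = 0"
    using dr[of 0 1] I drift_off0[of 1 lam d I x] by simp
  hence x01: "x 0 1 = 1 / real d" using x11 zQ[of 1 0] I lam dpos by (simp add: field_simps)
  have x0j: "\<And>j. 2 \<le> j \<Longrightarrow> j \<le> I \<Longrightarrow> x 0 j = 0"
  proof -
    fix j :: nat assume h: "2 \<le> j" "j \<le> I"
    have "x 1 j - lam * real d * x 0 j - Q lam d I x 0 j = 0"
      using dr[of 0 j] h drift_off0[of j lam d I x] by simp
    thus "x 0 j = 0" using x1j[OF h] zQ[of j 0] h lam dpos by simp
  qed
  have sr: "(\<Sum>i=1..I. row I x i) = lam"
  proof -
    have "(\<Sum>m=1..I-1. Gf lam d I x m) = 0" using zG by (intro sum.neutral) auto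
    thus ?thesis using sum_rows_pos[OF fp I] zP zR[of 0] by simp
  qed
  have tot: "row I x 0 = 1 - lam"
    using rows_total[OF S] sr by (simp add: sum.atLeast_Suc_atMost)
  have "(\<Sum>j=1..I. x 0 j) = x 0 1 + (\<Sum>j=Suc 1..I. x 0 j)"
    using I by (intro sum.atLeast_Suc_atMost) simp
  moreover have "(\<Sum>j=Suc 1..I. x 0 j) = 0" using x0j by (intro sum.neutral) auto
  ultimately have "row I x 0 = x 0 0 + 1 / real d" using row_split[of 0 I x] x01 by simp
  hence x00: "x 0 0 = 1 - lam - 1 / real d" using tot by simp
  consider "i=0" "j=0" | "i=0" "j=1" | "i=0" "2\<le>j" | "i=1" "j=1" | "i=1" "2\<le>j" | "2\<le>i"
    using ij by linarith
  then show ?thesis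
  proof cases
    case 1 thus ?thesis using x00 by (simp add: xstar_def)
  next
    case 2 thus ?thesis using x01 by (simp add: xstar_def)
  next
    case 3 thus ?thesis using x0j[of j] ij by (simp add: xstar_def)
  next
    case 4 thus ?thesis using x11 by (simp add: xstar_def)
  next
    case 5 thus ?thesis using x1j[of j] ij by (simp add: xstar_def)
  next
    case 6 thus ?thesis using xhi[of i j] ij by (simp add: xstar_def)
  qed
qed


lemma xstar_fp:
  assumes lam: "0 < lam" and d: "2 \<le> d" and I: "1 < I" and lt: "lam < 1 - 1 / real d"
  shows "fixed_point lam d I (xstar lam d)"
proof -
  let ?x = "xstar lam d"
  have dpos: "0 < real d" using d by simp
  have x00: "0 < 1 - lam - 1 / real d" using lt by simp
  have nn: "\<And>i j. 0 \<le> ?x i j" using x00 lam dpos by (simp add: xstar_def)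
  have row: "\<And>i. row I ?x i = (if i = 0 then 1 - lam else if i = 1 then lam else 0)"
  proof -
    fix i
    have z: "(\<Sum>j=Suc (Suc 0)..I. ?x i j) = 0" by (intro sum.neutral) (auto simp: xstar_def)
    show "row I ?x i = (if i = 0 then 1 - lam else if i = 1 then lam else 0)"
    proof (cases "i \<le> 1")
      case True
      have "(\<Sum>j=Suc 0..I. ?x i j) = ?x i (Suc 0) + (\<Sum>j=Suc (Suc 0)..I. ?x i j)"
        using I by (intro sum.atLeast_Suc_atMost) simp
      moreover have "(\<Sum>j=0..I. ?x i j) = ?x i 0 + (\<Sum>j=Suc 0..I. ?x i j)"
        by (intro sum.atLeast_Suc_atMost) simp
      ultimately show ?thesis using True z unfolding row_def
        by (cases "i = 0") (auto simp: xstar_def)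
    next
      case False
      thus ?thesis unfolding row_def by (auto intro!: sum.neutral simp: xstar_def)
    qed
  qed
  have inS: "inS I ?x"
  proof -
    have "(\<Sum>i=0..I. row I ?x i) = 1"
    proof -
      have "(\<Sum>i=0..I. row I ?x i) = row I ?x 0 + (\<Sum>i=Suc 0..I. row I ?x i)"
        by (intro sum.atLeast_Suc_atMost) simp
      also have "(\<Sum>i=Suc 0..I. row I ?x i) = row I ?x (Suc 0) + (\<Sum>i=Suc (Suc 0)..I. row I ?x i)"
        using I by (intro sum.atLeast_Suc_atMost) simp
      also have "(\<Sum>i=Suc (Suc 0)..I. row I ?x i) = 0" by (intro sum.neutral) (auto simp: row)
      finally show ?thesis by (simp add: row)
    qed
    thus ?thesis unfolding inS_def row_def using nn by simp
  qed
  have c0: "0 < col ?x 0" using x00 by (simp add: col_def xstar_def)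
  have Z: "\<And>n. (\<Sum>i=0..n. col ?x i) \<noteq> 0"
    by (rule Z_false) (use c0 nn in \<open>auto simp: col_def intro!: sum_nonneg\<close>)
  have zR: "\<And>n. Rf lam d I ?x n = 0" using Z by (simp add: Rf_def)
  have zG: "\<And>n. Gf lam d I ?x n = 0" using Z by (simp add: Gf_def)
  have zrho: "\<And>a b k. rho lam d I ?x k a b = 0" using zR by (simp add: rho_def)
  have "drift lam d I ?x i j = 0" if ij: "i \<le> j" "j \<le> I" for i j
    using ij I dpos unfolding drift_def by (simp add: zR zG zrho row xstar_def)
  thus ?thesis using inS unfolding fixed_point_def by auto
qed


theorem mainTheorem6:
  fixes lam :: real and d I :: nat
  assumes "0 < lam" and "lam < 1" and "2 \<le> d" and "1 < I"
    and "lam < 1 - 1 / real d"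
  shows "fixed_point lam d I (xstar lam d)
    \<and> (\<forall>x. fixed_point lam d I x \<longrightarrow> (\<forall>i j. i \<le> j \<and> j \<le> I \<longrightarrow> x i j = xstar lam d i j))
    \<and> 0 < xstar lam d 0 0"
proof (intro conjI allI impI)
  show "fixed_point lam d I (xstar lam d)" by (rule xstar_fp) (use assms in auto)
  show "0 < xstar lam d 0 0" using assms by (simp add: xstar_def)
next
  fix x i j assume fp: "fixed_point lam d I x" and ij: "i \<le> j \<and> j \<le> I"
  have "0 \<le> x 0 0" using fp unfolding fixed_point_def inS_def by auto
  moreover have "x 0 0 \<noteq> 0" using no_zero_case[OF fp] assms by auto
  ultimately have "0 < x 0 0" by simp
  thus "x i j = xstar lam d i j" using pos_case[OF fp] assms ij by auto
qed

end
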